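(* Let $Q(x_1,\ldots,x_q)$ be a polynomial with integer coefficients. For each $i\in\{1,\ldots,q\}$ let $d_i$ be an upper bound on the degree of $x_i$ in $Q$, let $k_i=\lceil\log(d_i+1)\rceil$, and let $K=\sum_{i=1}^q k_i$. Let $p_{1,1},\ldots,p_{1,k_1},\ldots,p_{q,1},\ldots,p_{q,k_q}$ be $K$ distinct primes, and for each $p_{i,j}$ let $b_{i,j}\in\{0,1\}$ be a bit. For each $i$ let $\pi_i=\sum_{j=1}^{k_i}(-1)^{b_{i,j}}\sqrt{p_{i,j}}$. Then $Q(x_1,\ldots,x_q)\not\equiv 0$ (as a polynomial) if and only if $Q(\pi_1,\ldots,\pi_q)\neq 0$.
   Context: All logarithms $\log$ are to base 2. *)

theory Defs
  imports Complex_Main "HOL-Library.Poly_Mapping" "HOL-Computational_Algebra.Primes"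
begin

text \<open>Multivariate integer polynomials are represented as finitely supported maps
from monomials (exponent vectors, themselves finitely supported maps
nat to nat; variable x_i has index i) to integer coefficients.\<close>

type_synonym int_mpoly = "(nat \<Rightarrow>\<^sub>0 nat) \<Rightarrow>\<^sub>0 int"

definition monom_eval :: "(nat \<Rightarrow>\<^sub>0 nat) \<Rightarrow> (nat \<Rightarrow> real) \<Rightarrow> real" where
  "monom_eval m x = (\<Prod>i\<in>Poly_Mapping.keys m. x i ^ Poly_Mapping.lookup m i)"

definition mpoly_eval :: "int_mpoly \<Rightarrow> (nat \<Rightarrow> real) \<Rightarrow> real" where
  "mpoly_eval Q x = (\<Sum>m\<in>Poly_Mapping.keys Q. real_of_int (Poly_Mapping.lookup Q m) * monom_eval m x)"

end

theory Submission
  imports Defs "HOL-Computational_Algebra.Polynomial" "HOL-Library.FuncSet"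
begin


lemma sqrt_prime_mult_irrat:
  fixes p r :: nat
  assumes "prime p" "\<not> p dvd r"
  shows "sqrt (real (p * r)) \<notin> \<rat>"
proof
  from \<open>prime p\<close> have p: "p > 1" by (rule prime_gt_1_nat)
  assume "sqrt (real (p*r)) \<in> \<rat>"
  then obtain m n :: nat
    where n: "n \<noteq> 0"
      and sqrt_rat: "\<bar>sqrt (real (p*r))\<bar> = m / n"
      and "coprime m n" by (rule Rats_abs_nat_div_natE)
  from n and sqrt_rat have "m = \<bar>sqrt (real (p*r))\<bar> * n" by simp
  then have "m\<^sup>2 = (sqrt (real (p*r)))\<^sup>2 * n\<^sup>2" by (auto simp add: power2_eq_square)
  also have "(sqrt (real (p*r)))\<^sup>2 = real (p*r)" by simp
  finally have "real (m\<^sup>2) = real (p * r * n\<^sup>2)" by simp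
  then have eq: "m\<^sup>2 = p * r * n\<^sup>2" by (simp only: of_nat_eq_iff)
  then have "p dvd m\<^sup>2" by simp
  with \<open>prime p\<close> have dvd_m: "p dvd m" by (rule prime_dvd_power)
  then obtain k where "m = p * k" ..
  with eq have "p * (r * n\<^sup>2) = p * (p * k\<^sup>2)" by algebra
  with p have "r * n\<^sup>2 = p * k\<^sup>2" by simp
  then have "p dvd r * n\<^sup>2" by (metis dvd_triv_left)
  with \<open>prime p\<close> assms(2) have "p dvd n\<^sup>2" using prime_dvd_mult_iff by blast
  with \<open>prime p\<close> have "p dvd n" by (rule prime_dvd_power)
  with dvd_m have "p dvd gcd m n" by (rule gcd_greatest)
  with \<open>coprime m n\<close> have "p = 1" by simp
  with p show False by simp
qed

lemma prod_sqrt: "finite S \<Longrightarrow> (\<Prod>t\<in>S. sqrt (f t)) = sqrt (\<Prod>t\<in>S. f t)"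
  by (induction S rule: finite_induct) (auto simp: real_sqrt_mult)

definition rt :: "nat set \<Rightarrow> real" where "rt S = (\<Prod>t\<in>S. sqrt (real t))"

lemma rt_irrat:
  assumes "finite T" "T \<noteq> {}" "\<forall>t\<in>T. prime t"
  shows "rt T \<notin> \<rat>"
proof -
  obtain t where t: "t \<in> T" using assms by auto
  have "rt T = sqrt (real (\<Prod>T))"
    unfolding rt_def using assms(1) by (simp add: prod_sqrt)
  also have "\<Prod>T = t * \<Prod>(T - {t})"
    using assms(1) t by (simp add: prod.remove)
  finally have e: "rt T = sqrt (real (t * \<Prod>(T - {t})))" .
  have "\<not> t dvd \<Prod>(T - {t})"
  proof
    assume "t dvd \<Prod>(T - {t})"
    then obtain u where u: "u \<in> T - {t}" "t dvd u"
      using prime_dvd_prod_iff[of "T - {t}" t "\<lambda>x. x"] assms t by auto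
    then have "t = u" using assms t
      by (metis DiffD1 primes_dvd_imp_eq)
    then show False using u by auto
  qed
  then show ?thesis using e sqrt_prime_mult_irrat[of t "\<Prod>(T - {t})"] assms t by metis
qed

fun FF :: "nat list \<Rightarrow> real set" where
  "FF [] = \<rat>"
| "FF (p # ps) = {a + b * sqrt (real p) | a b. a \<in> FF ps \<and> b \<in> FF ps}"

lemma FF_rats: "\<rat> \<subseteq> FF ps"
proof (induction ps)
  case Nil then show ?case by simp
next
  case (Cons p ps)
  show ?case
  proof
    fix x :: real assume "x \<in> \<rat>"
    then have "x = x + 0 * sqrt (real p) \<and> x \<in> FF ps \<and> 0 \<in> FF ps" using Cons by auto
    then show "x \<in> FF (p # ps)" by (simp only: FF.simps) blast
  qed
qed

lemma FF_rat: "x \<in> \<rat> \<Longrightarrow> x \<in> FF ps"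
  using FF_rats by blast

lemma FF_0: "0 \<in> FF ps" and FF_1: "1 \<in> FF ps" and FF_nat: "real n \<in> FF ps"
  and FF_int: "real_of_int z \<in> FF ps"
  by (auto intro: FF_rat)

lemma FF_mono: "x \<in> FF ps \<Longrightarrow> x \<in> FF (p # ps)"
proof -
  assume "x \<in> FF ps"
  moreover have "(0::real) \<in> FF ps" by (rule FF_0)
  ultimately have "x = x + 0 * sqrt (real p) \<and> x \<in> FF ps \<and> 0 \<in> FF ps" by auto
  then show ?thesis by (simp only: FF.simps) blast
qed

lemma FF_closed: "(x \<in> FF ps \<longrightarrow> y \<in> FF ps \<longrightarrow> x + y \<in> FF ps) \<and>
  (x \<in> FF ps \<longrightarrow> - x \<in> FF ps) \<and>
  (x \<in> FF ps \<longrightarrow> y \<in> FF ps \<longrightarrow> x * y \<in> FF ps)"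
proof (induction ps arbitrary: x y)
  case Nil then show ?case by simp
next
  case (Cons p ps)
  have add: "x + y \<in> FF ps" if "x \<in> FF ps" "y \<in> FF ps" for x y using Cons that by blast
  have neg: "- x \<in> FF ps" if "x \<in> FF ps" for x using Cons that by blast
  have mul: "x * y \<in> FF ps" if "x \<in> FF ps" "y \<in> FF ps" for x y using Cons that by blast
  have pp: "real p \<in> FF ps" by (rule FF_nat)
  show ?case
  proof (intro conjI impI)
    assume "x \<in> FF (p # ps)" "y \<in> FF (p # ps)"
    then obtain a b c d where ab: "x = a + b * sqrt (real p)" "a \<in> FF ps" "b \<in> FF ps"
      and cd: "y = c + d * sqrt (real p)" "c \<in> FF ps" "d \<in> FF ps" by auto
    have "x + y = (a + c) + (b + d) * sqrt (real p)" using ab cd by (simp add: algebra_simps)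
    moreover have "a + c \<in> FF ps" "b + d \<in> FF ps" using ab cd add by auto
    ultimately show "x + y \<in> FF (p # ps)" by (simp only: FF.simps) blast
    have "x * y = (a * c + real p * (b * d)) + (a * d + b * c) * sqrt (real p)"
      using ab cd by (simp add: algebra_simps flip: power2_eq_square)
    moreover have "a * c + real p * (b * d) \<in> FF ps" "a * d + b * c \<in> FF ps"
      using ab cd add mul pp by auto
    ultimately show "x * y \<in> FF (p # ps)" by (simp only: FF.simps) blast
  next
    assume "x \<in> FF (p # ps)"
    then obtain a b where ab: "x = a + b * sqrt (real p)" "a \<in> FF ps" "b \<in> FF ps" by auto
    have "- x = (- a) + (- b) * sqrt (real p)" using ab by simp
    moreover have "- a \<in> FF ps" "- b \<in> FF ps" using ab neg by auto
    ultimately show "- x \<in> FF (p # ps)" by (simp only: FF.simps) blast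
  qed
qed

lemma FF_add: "x \<in> FF ps \<Longrightarrow> y \<in> FF ps \<Longrightarrow> x + y \<in> FF ps"
  and FF_neg: "x \<in> FF ps \<Longrightarrow> - x \<in> FF ps"
  and FF_mult: "x \<in> FF ps \<Longrightarrow> y \<in> FF ps \<Longrightarrow> x * y \<in> FF ps"
  using FF_closed by blast+

lemma FF_sum: "finite A \<Longrightarrow> (\<And>a. a \<in> A \<Longrightarrow> f a \<in> FF ps) \<Longrightarrow> sum f A \<in> FF ps"
  by (induction A rule: finite_induct) (use FF_0 FF_add in auto)

lemma FF_prod: "finite A \<Longrightarrow> (\<And>a. a \<in> A \<Longrightarrow> f a \<in> FF ps) \<Longrightarrow> prod f A \<in> FF ps"
  by (induction A rule: finite_induct) (use FF_1 FF_mult in auto)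

lemma FF_sqrt: "p \<in> set ps \<Longrightarrow> sqrt (real p) \<in> FF ps"
proof (induction ps)
  case Nil then show ?case by simp
next
  case (Cons a ps)
  show ?case
  proof (cases "p = a")
    case True
    have "sqrt (real p) = 0 + 1 * sqrt (real a) \<and> (0::real) \<in> FF ps \<and> (1::real) \<in> FF ps"
      using True FF_0 FF_1 by auto
    then show ?thesis by (simp only: FF.simps) blast
  next
    case False then show ?thesis using Cons FF_mono by auto
  qed
qed

lemma rt_FF: "S \<subseteq> set ps \<Longrightarrow> rt S \<in> FF ps"
  unfolding rt_def
  by (rule FF_prod) (auto intro: finite_subset FF_sqrt)

lemma rt_insert: "finite S \<Longrightarrow> p \<notin> S \<Longrightarrow> rt (insert p S) = sqrt (real p) * rt S"
  unfolding rt_def by simp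

lemma alg_sq: "(a + b * s) * (a + b * (s::real)) = (a * a + (s * s) * (b * b)) + (2 * a * b) * s"
  by (simp add: algebra_simps)

lemma alg_inv: "N = a * a - (s * s) * (b * b) \<Longrightarrow> N \<noteq> 0 \<Longrightarrow>
   (a + b * s) * (a / N + (- b / N) * (s::real)) = 1"
  by (simp add: field_simps)

lemma alg_solve: "X = Y + (2 * a * b) * s \<Longrightarrow> a \<noteq> 0 \<Longrightarrow> b \<noteq> 0 \<Longrightarrow> (s::real) = (X - Y) / (2 * a * b)"
  by (simp add: field_simps)

lemma alg_ratio: "a * a = (s * s) * (b * b) \<Longrightarrow> b \<noteq> 0 \<Longrightarrow> a / b = s \<or> a / b = - (s::real)"
proof -
  assume h: "a * a = (s * s) * (b * b)" "b \<noteq> 0"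
  then have "(a / b) * (a / b) = s * s" by (simp add: field_simps)
  then have "(a / b)\<^sup>2 = s\<^sup>2" by (simp only: power2_eq_square)
  then show ?thesis by (simp only: power2_eq_iff)
qed

lemma FF_main:
  assumes "distinct ps" "\<forall>p\<in>set ps. prime p"
  shows "(\<forall>x\<in>FF ps. x \<noteq> 0 \<longrightarrow> inverse x \<in> FF ps) \<and>
    (\<forall>T. finite T \<and> T \<noteq> {} \<and> (\<forall>t\<in>T. prime t) \<and> T \<inter> set ps = {} \<longrightarrow> rt T \<notin> FF ps)"
  using assms
proof (induction ps)
  case Nil
  then show ?case using rt_irrat by auto
next
  case (Cons p ps)
  then have IH: "\<And>x. x\<in>FF ps \<Longrightarrow> x \<noteq> 0 \<Longrightarrow> inverse x \<in> FF ps"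
    and IG: "\<And>T. finite T \<Longrightarrow> T \<noteq> {} \<Longrightarrow> (\<forall>t\<in>T. prime t) \<Longrightarrow> T \<inter> set ps = {} \<Longrightarrow> rt T \<notin> FF ps"
    and pnot: "p \<notin> set ps" and pprime: "prime p" by auto
  define s where "s = sqrt (real p)"
  have sp: "s \<notin> FF ps"
    using IG[of "{p}"] pnot pprime by (simp add: rt_def s_def)
  have pp: "real p \<in> FF ps" by (rule FF_nat)
  have ppos: "real p > 0" using pprime prime_gt_0_nat by simp
  have div: "x / y \<in> FF ps" if "x \<in> FF ps" "y \<in> FF ps" "y \<noteq> 0" for x y
    using FF_mult[OF that(1) IH[OF that(2,3)]] by (simp add: divide_inverse)
  have sq: "s * s = real p" using ppos unfolding s_def by simp
  have FFc: "x \<in> FF (p # ps) \<longleftrightarrow> (\<exists>a b. x = a + b * s \<and> a \<in> FF ps \<and> b \<in> FF ps)" for x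
    unfolding s_def by simp
  show ?case
  proof (intro conjI ballI impI allI)
    fix x assume "x \<in> FF (p # ps)" "x \<noteq> 0"
    then obtain a b where ab: "x = a + b * s" "a \<in> FF ps" "b \<in> FF ps" unfolding FFc by blast
    show "inverse x \<in> FF (p # ps)"
    proof (cases "b = 0")
      case True
      then have "inverse x = inverse a" "a \<noteq> 0" using ab \<open>x \<noteq> 0\<close> by auto
      moreover have "inverse a \<in> FF ps" using IH ab \<open>a \<noteq> 0\<close> by blast
      ultimately have "inverse x \<in> FF ps" by simp
      then show ?thesis by (rule FF_mono)
    next
      case False
      define N where "N = a * a - (s * s) * (b * b)"
      have "a * a \<in> FF ps" "real p * (b * b) \<in> FF ps" using ab pp by (blast intro: FF_mult)+
      then have N: "N \<in> FF ps" unfolding N_def sq diff_conv_add_uminus by (blast intro: FF_add FF_neg)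
      have "N \<noteq> 0"
      proof
        assume "N = 0"
        then have "a / b = s \<or> a / b = - s" using alg_ratio[of a s b] False unfolding N_def by simp
        moreover have "a / b \<in> FF ps" using div ab False by blast
        moreover have "- s \<notin> FF ps" using sp FF_neg[of "- s" ps] by auto
        ultimately show False using sp by metis
      qed
      have "inverse x = a / N + (- b / N) * s"
        using alg_inv[OF N_def \<open>N \<noteq> 0\<close>] ab(1) by (metis inverse_unique)
      moreover have "a / N \<in> FF ps" "- b / N \<in> FF ps" using div N \<open>N \<noteq> 0\<close> ab FF_neg by blast+
      ultimately show ?thesis unfolding FFc by blast
    qed
  next
    fix T :: "nat set"
    assume T: "finite T \<and> T \<noteq> {} \<and> (\<forall>t\<in>T. prime t) \<and> T \<inter> set (p # ps) = {}"
    show "rt T \<notin> FF (p # ps)"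
    proof
      assume "rt T \<in> FF (p # ps)"
      then obtain a b where ab: "rt T = a + b * s" "a \<in> FF ps" "b \<in> FF ps" unfolding FFc by blast
      have rr: "rt T * rt T = real (\<Prod>T)"
        unfolding rt_def using T by (simp add: prod_sqrt abs_of_nonneg prod_nonneg flip: prod.distrib)
      have X: "real (\<Prod>T) = (a * a + (s * s) * (b * b)) + (2 * a * b) * s"
        using rr alg_sq[of a b s] unfolding ab(1) by simp
      show False
      proof (cases "a = 0 \<or> b = 0")
        case False
        then have "s = (real (\<Prod>T) - (a * a + (s * s) * (b * b))) / (2 * a * b)"
          using alg_solve[OF X] by blast
        moreover have "a * a \<in> FF ps" "real p * (b * b) \<in> FF ps" using ab pp by (blast intro: FF_mult)+
        then have "(real (\<Prod>T) - (a * a + (s * s) * (b * b))) \<in> FF ps"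
          unfolding sq diff_conv_add_uminus by (blast intro: FF_add FF_neg FF_nat)
        moreover have "2 * a * b \<in> FF ps" using ab FF_nat[of 2 ps] by (auto intro: FF_mult)
        moreover have "2 * a * b \<noteq> 0" using False by simp
        ultimately have "s \<in> FF ps" using div by metis
        then show False using sp by simp
      next
        case True
        then show False
        proof
          assume "b = 0"
          then have "rt T \<in> FF ps" using ab by simp
          then show False using IG[of T] T by auto
        next
          assume "a = 0"
          have "rt (insert p T) = s * rt T" using T by (simp add: rt_insert s_def)
          also have "\<dots> = b * real p" using ab(1) \<open>a = 0\<close> sq by (simp add: mult.commute mult.left_commute)
          finally have "rt (insert p T) \<in> FF ps" using ab pp by (metis FF_mult)
          then show False using IG[of "insert p T"] T pnot pprime by auto
        qed
      qed
    qed
  qed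
qed

lemma lin_indep_list:
  assumes "distinct ps" "\<forall>p\<in>set ps. prime p"
  shows "\<forall>c. (\<forall>S. c S \<in> \<rat>) \<longrightarrow> (\<Sum>S\<in>Pow (set ps). c S * rt S) = 0 \<longrightarrow> (\<forall>S\<in>Pow (set ps). c S = 0)"
  using assms
proof (induction ps)
  case Nil
  then show ?case by (simp add: rt_def)
next
  case (Cons p ps)
  have IH: "\<And>c. (\<forall>S. c S \<in> \<rat>) \<Longrightarrow> (\<Sum>S\<in>Pow (set ps). c S * rt S) = 0 \<Longrightarrow> (\<forall>S\<in>Pow (set ps). c S = 0)"
    using Cons by auto
  have pnot: "p \<notin> set ps" and pprime: "prime p" using Cons.prems by auto
  have sp: "sqrt (real p) \<notin> FF ps"
    using FF_main[of ps] Cons.prems pnot pprime by (auto simp: rt_def)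
  have inv: "\<And>x. x\<in>FF ps \<Longrightarrow> x \<noteq> 0 \<Longrightarrow> inverse x \<in> FF ps"
    using FF_main[of ps] Cons.prems by auto
  show ?case
  proof (intro allI impI)
    fix c :: "nat set \<Rightarrow> real"
    assume crat: "\<forall>S. c S \<in> \<rat>" and sum0: "(\<Sum>S\<in>Pow (set (p # ps)). c S * rt S) = 0"
    define A where "A = (\<Sum>S\<in>Pow (set ps). c S * rt S)"
    define B where "B = (\<Sum>S\<in>Pow (set ps). c (insert p S) * rt S)"
    have disj: "Pow (set ps) \<inter> insert p ` Pow (set ps) = {}" using pnot by auto
    have inj: "inj_on (insert p) (Pow (set ps))" using pnot
      by (intro inj_onI) (metis PowD insert_ident subsetD)
    have "(\<Sum>S\<in>Pow (set (p # ps)). c S * rt S)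
        = (\<Sum>S\<in>Pow (set ps). c S * rt S) + (\<Sum>S\<in>insert p ` Pow (set ps). c S * rt S)"
      by (simp add: Pow_insert sum.union_disjoint disj)
    also have "(\<Sum>S\<in>insert p ` Pow (set ps). c S * rt S) = (\<Sum>S\<in>Pow (set ps). c (insert p S) * rt (insert p S))"
      by (simp add: sum.reindex[OF inj])
    also have "\<dots> = sqrt (real p) * B" unfolding B_def sum_distrib_left
    proof (rule sum.cong)
      fix S assume "S \<in> Pow (set ps)"
      then have "finite S" "p \<notin> S" using pnot finite_subset by auto
      then show "c (insert p S) * rt (insert p S) = sqrt (real p) * (c (insert p S) * rt S)"
        by (simp add: rt_insert)
    qed simp
    finally have AB: "A + sqrt (real p) * B = 0" using sum0 unfolding A_def by simp
    have AF: "A \<in> FF ps" unfolding A_def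
      by (intro FF_sum FF_mult FF_rat rt_FF) (use crat in auto)
    have BF: "B \<in> FF ps" unfolding B_def
      by (intro FF_sum FF_mult FF_rat rt_FF) (use crat in auto)
    have "B = 0"
    proof (rule ccontr)
      assume "B \<noteq> 0"
      then have "sqrt (real p) = - A * inverse B" using AB by (simp add: field_simps)
      moreover have "- A * inverse B \<in> FF ps" using FF_mult FF_neg AF inv BF \<open>B \<noteq> 0\<close> by blast
      ultimately show False using sp by simp
    qed
    then have "A = 0" using AB by simp
    have c1: "\<forall>S\<in>Pow (set ps). c S = 0" using IH[of c] crat \<open>A = 0\<close> unfolding A_def by blast
    have c2: "\<forall>S\<in>Pow (set ps). c (insert p S) = 0"
      using IH[of "\<lambda>S. c (insert p S)"] crat \<open>B = 0\<close> unfolding B_def by blast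
    show "\<forall>S\<in>Pow (set (p # ps)). c S = 0"
    proof
      fix S assume "S \<in> Pow (set (p # ps))"
      then have "S \<in> Pow (set ps) \<or> (\<exists>S'\<in>Pow (set ps). S = insert p S')"
        by (simp add: Pow_insert) blast
      then show "c S = 0" using c1 c2 by auto
    qed
  qed
qed

lemma lin_indep:
  assumes "finite P" "\<forall>p\<in>P. prime p" "\<forall>S. c S \<in> \<rat>" "(\<Sum>S\<in>Pow P. c S * rt S) = 0"
  shows "\<forall>S\<in>Pow P. c S = 0"
proof -
  obtain ps where "set ps = P" "distinct ps" using finite_distinct_list[OF assms(1)] by auto
  then show ?thesis using lin_indep_list[of ps] assms by auto
qed

lemma lin_indep_sqrt:
  assumes "finite P" "\<forall>p\<in>P. prime p" "\<forall>t. w t \<in> \<rat>" "(\<Sum>t\<in>P. w t * sqrt (real t)) = 0"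
  shows "\<forall>t\<in>P. w t = 0"
proof -
  define c where "c S = (if \<exists>t. S = {t} then w (the_elem S) else 0)" for S
  have "(\<Sum>S\<in>Pow P. c S * rt S) = (\<Sum>S\<in>(\<lambda>t. {t}) ` P. c S * rt S)"
    by (rule sum.mono_neutral_right) (auto simp: c_def assms(1))
  also have "\<dots> = (\<Sum>t\<in>P. w t * sqrt (real t))"
    by (subst sum.reindex) (auto simp: c_def rt_def inj_on_def)
  finally have "\<forall>S\<in>Pow P. c S = 0" using lin_indep[of P c] assms
    by (auto simp: c_def)
  show ?thesis
  proof
    fix t assume "t \<in> P"
    then have "c {t} = 0" using \<open>\<forall>S\<in>Pow P. c S = 0\<close> by blast
    then show "w t = 0" by (simp add: c_def)
  qed
qed



lemma poly_vanish:
  fixes a :: "nat \<Rightarrow> real"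
  assumes "finite A" "D < card A" "\<forall>t\<in>A. (\<Sum>j\<le>D. a j * t ^ j) = 0"
  shows "\<forall>j\<le>D. a j = 0"
proof -
  define P where "P = (\<Sum>j\<le>D. monom (a j) j)"
  have ev: "poly P t = (\<Sum>j\<le>D. a j * t ^ j)" for t
    unfolding P_def by (simp add: poly_sum poly_monom)
  have deg: "degree P \<le> D" unfolding P_def
    by (rule degree_sum_le[THEN order_trans]) (auto intro: order_trans[OF degree_monom_le])
  have "P = 0"
    by (rule poly_eqI_degree[of A]) (use assms ev deg in auto)
  show ?thesis
  proof (intro allI impI)
    fix j assume "j \<le> D"
    have "coeff P j = (\<Sum>i\<le>D. if j = i then a i else 0)"
      unfolding P_def by (simp add: coeff_sum coeff_monom)
    also have "\<dots> = a j" using \<open>j \<le> D\<close> by (simp add: sum.delta)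
    finally show "a j = 0" using \<open>P = 0\<close> by simp
  qed
qed

lemma grid:
  fixes n :: nat and M :: "(nat \<Rightarrow> nat) set" and d :: "nat \<Rightarrow> nat" and A :: "nat \<Rightarrow> real set"
  shows "finite M \<Longrightarrow> (\<forall>e\<in>M. (\<forall>i\<ge>n. e i = 0) \<and> (\<forall>i<n. e i \<le> d i)) \<Longrightarrow>
   (\<forall>i<n. finite (A i) \<and> d i < card (A i)) \<Longrightarrow>
   (\<forall>x. (\<forall>i<n. x i \<in> A i) \<longrightarrow> (\<Sum>e\<in>M. c e * (\<Prod>i<n. x i ^ e i)) = (0::real)) \<Longrightarrow>
   \<forall>e\<in>M. c e = 0"
proof (induction n arbitrary: M c)
  case 0
  then have M: "M \<subseteq> {\<lambda>_. 0}" by auto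
  show ?case
  proof (cases "M = {}")
    case True then show ?thesis by simp
  next
    case False
    then have "M = {\<lambda>_. 0}" using M by auto
    then show ?thesis using "0.prems"(4) by auto
  qed
next
  case (Suc n)
  note fin = Suc.prems(1) and Mc = Suc.prems(2) and Ac = Suc.prems(3) and van = Suc.prems(4)
  define D where "D = d n"
  define a where "a x j = (\<Sum>e\<in>{e\<in>M. e n = j}. c e * (\<Prod>i<n. x i ^ e i))" for x j
  have aj0: "\<forall>j\<le>D. a x j = 0" if x: "\<forall>i<n. x i \<in> A i" for x
  proof (rule poly_vanish[of "A n"])
    show "finite (A n)" "D < card (A n)" using Ac unfolding D_def by auto
    show "\<forall>t\<in>A n. (\<Sum>j\<le>D. a x j * t ^ j) = 0"
    proof
      fix t assume t: "t \<in> A n"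
      have "(\<Sum>e\<in>M. c e * (\<Prod>i<Suc n. (x(n := t)) i ^ e i)) = 0"
      proof -
        have "\<forall>i<Suc n. (x(n := t)) i \<in> A i" using x t by (auto simp: less_Suc_eq)
        then show ?thesis using van by blast
      qed
      also have "(\<Sum>e\<in>M. c e * (\<Prod>i<Suc n. (x(n := t)) i ^ e i))
          = (\<Sum>e\<in>M. c e * (\<Prod>i<n. x i ^ e i) * t ^ e n)"
        by (intro sum.cong refl) (simp add: lessThan_Suc)
      also have "\<dots> = (\<Sum>e\<in>M. \<Sum>j\<le>D. if e n = j then c e * (\<Prod>i<n. x i ^ e i) * t ^ j else 0)"
      proof (intro sum.cong refl)
        fix e assume "e \<in> M"
        then have "e n \<le> D" using Mc unfolding D_def by auto
        then show "c e * (\<Prod>i<n. x i ^ e i) * t ^ e n =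
            (\<Sum>j\<le>D. if e n = j then c e * (\<Prod>i<n. x i ^ e i) * t ^ j else 0)"
          by (simp add: sum.delta)
      qed
      also have "\<dots> = (\<Sum>j\<le>D. \<Sum>e\<in>M. if e n = j then c e * (\<Prod>i<n. x i ^ e i) * t ^ j else 0)"
        by (rule sum.swap)
      also have "\<dots> = (\<Sum>j\<le>D. a x j * t ^ j)"
      proof (rule sum.cong[OF refl])
        fix j assume "j \<in> {..D}"
        have "(\<Sum>e\<in>M. if e n = j then c e * (\<Prod>i<n. x i ^ e i) * t ^ j else 0)
            = (\<Sum>e\<in>{e\<in>M. e n = j}. c e * (\<Prod>i<n. x i ^ e i) * t ^ j)"
          by (simp add: sum.inter_filter[OF fin])
        also have "\<dots> = a x j * t ^ j" unfolding a_def sum_distrib_right ..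
        finally show "(\<Sum>e\<in>M. if e n = j then c e * (\<Prod>i<n. x i ^ e i) * t ^ j else 0) = a x j * t ^ j" .
      qed
      finally show "(\<Sum>j\<le>D. a x j * t ^ j) = 0" by simp
    qed
  qed
  show ?case
  proof
    fix e0 assume e0: "e0 \<in> M"
    define j where "j = e0 n"
    have jD: "j \<le> D" using Mc e0 unfolding j_def D_def by auto
    define Mj where "Mj = (\<lambda>e. e(n := 0)) ` {e\<in>M. e n = j}"
    define cj where "cj e = c (e(n := j))" for e
    have inj: "inj_on (\<lambda>e. e(n := 0)) {e\<in>M. e n = j}"
    proof (rule inj_onI)
      fix e e' assume "e \<in> {e\<in>M. e n = j}" "e' \<in> {e\<in>M. e n = j}" "e(n := 0) = e'(n := 0)"
      note h = this
      show "e = e'"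
      proof
        fix i show "e i = e' i" using fun_cong[OF h(3), of i] h(1,2) by (cases "i = n") auto
      qed
    qed
    have "\<forall>e\<in>Mj. cj e = 0"
    proof (rule Suc.IH)
      show "finite Mj" unfolding Mj_def using fin by auto
      show "\<forall>e\<in>Mj. (\<forall>i\<ge>n. e i = 0) \<and> (\<forall>i<n. e i \<le> d i)"
        unfolding Mj_def using Mc by (auto simp: Suc_le_eq)
      show "\<forall>i<n. finite (A i) \<and> d i < card (A i)" using Ac by auto
      show "\<forall>x. (\<forall>i<n. x i \<in> A i) \<longrightarrow> (\<Sum>e\<in>Mj. cj e * (\<Prod>i<n. x i ^ e i)) = 0"
      proof (intro allI impI)
        fix x assume x: "\<forall>i<n. x i \<in> A i"
        have "(\<Sum>e\<in>Mj. cj e * (\<Prod>i<n. x i ^ e i)) =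
            (\<Sum>e\<in>{e\<in>M. e n = j}. cj (e(n := 0)) * (\<Prod>i<n. x i ^ (e(n := 0)) i))"
          unfolding Mj_def by (rule sum.reindex[OF inj, unfolded comp_def])
        also have "\<dots> = a x j" unfolding a_def cj_def
          by (intro sum.cong refl) (auto intro!: prod.cong arg_cong[where f = c])
        finally show "(\<Sum>e\<in>Mj. cj e * (\<Prod>i<n. x i ^ e i)) = 0" using aj0[OF x] jD by simp
      qed
    qed
    moreover have "e0(n := 0) \<in> Mj" unfolding Mj_def j_def using e0 by auto
    ultimately have "cj (e0(n := 0)) = 0" by blast
    then show "c e0 = 0" unfolding cj_def j_def by simp
  qed
qed



definition red :: "nat set \<Rightarrow> ((nat \<Rightarrow> real) \<Rightarrow> real) set" where
  "red P = {f. \<exists>c::nat set \<Rightarrow> int. \<forall>s. (\<forall>t\<in>P. (s t)\<^sup>2 = real t) \<longrightarrow>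
      f s = (\<Sum>S\<in>Pow P. real_of_int (c S) * (\<Prod>t\<in>S. s t))}"

lemma redI: "(\<And>s. (\<forall>t\<in>P. (s t)\<^sup>2 = real t) \<Longrightarrow> f s = (\<Sum>S\<in>Pow P. real_of_int (c S) * (\<Prod>t\<in>S. s t)))
   \<Longrightarrow> f \<in> red P"
  unfolding red_def by blast

lemma redE: "f \<in> red P \<Longrightarrow> (\<And>c. (\<And>s. (\<forall>t\<in>P. (s t)\<^sup>2 = real t) \<Longrightarrow>
    f s = (\<Sum>S\<in>Pow P. real_of_int (c S) * (\<Prod>t\<in>S. s t))) \<Longrightarrow> thesis) \<Longrightarrow> thesis"
  unfolding red_def by blast

lemma red_const: "finite P \<Longrightarrow> r \<in> \<int> \<Longrightarrow> (\<lambda>s. r) \<in> red P"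
proof -
  assume P: "finite P" and "r \<in> \<int>"
  from \<open>r \<in> \<int>\<close> obtain z where z: "r = real_of_int z" by (rule Ints_cases)
  show ?thesis
  proof (rule redI[where c = "\<lambda>S. if S = {} then z else 0"])
    fix s :: "nat \<Rightarrow> real"
    have "(\<Sum>S\<in>Pow P. real_of_int (if S = {} then z else 0) * (\<Prod>t\<in>S. s t))
        = (\<Sum>S\<in>Pow P. if S = {} then real_of_int z * (\<Prod>t\<in>S. s t) else 0)"
      by (rule sum.cong[OF refl]) simp
    also have "\<dots> = r" using z by (subst sum.delta) (simp_all add: P)
    finally show "r = (\<Sum>S\<in>Pow P. real_of_int (if S = {} then z else 0) * (\<Prod>t\<in>S. s t))" by simp
  qed
qed

lemma red_var: "finite P \<Longrightarrow> u \<in> P \<Longrightarrow> (\<lambda>s. s u) \<in> red P"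
proof -
  assume P: "finite P" and u: "u \<in> P"
  show ?thesis
  proof (rule redI[where c = "\<lambda>S. if S = {u} then 1 else 0"])
    fix s :: "nat \<Rightarrow> real"
    have "(\<Sum>S\<in>Pow P. real_of_int (if S = {u} then 1 else 0) * (\<Prod>t\<in>S. s t))
        = (\<Sum>S\<in>Pow P. if S = {u} then (\<Prod>t\<in>S. s t) else 0)"
      by (rule sum.cong[OF refl]) simp
    also have "\<dots> = s u" using u by (subst sum.delta) (simp_all add: P)
    finally show "s u = (\<Sum>S\<in>Pow P. real_of_int (if S = {u} then 1 else 0) * (\<Prod>t\<in>S. s t))" by simp
  qed
qed

lemma red_add: "f \<in> red P \<Longrightarrow> g \<in> red P \<Longrightarrow> (\<lambda>s. f s + g s) \<in> red P"
proof -
  assume "f \<in> red P" "g \<in> red P"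
  obtain a where a0: "\<forall>s. (\<forall>t\<in>P. (s t)\<^sup>2 = real t) \<longrightarrow> f s = (\<Sum>S\<in>Pow P. real_of_int (a S) * (\<Prod>t\<in>S. s t))"
    using \<open>f \<in> red P\<close> unfolding red_def by blast
  have a: "f s = (\<Sum>S\<in>Pow P. real_of_int (a S) * (\<Prod>t\<in>S. s t))" if "\<forall>t\<in>P. (s t)\<^sup>2 = real t" for s
    using a0 that by blast
  obtain b where b0: "\<forall>s. (\<forall>t\<in>P. (s t)\<^sup>2 = real t) \<longrightarrow> g s = (\<Sum>S\<in>Pow P. real_of_int (b S) * (\<Prod>t\<in>S. s t))"
    using \<open>g \<in> red P\<close> unfolding red_def by blast
  have b: "g s = (\<Sum>S\<in>Pow P. real_of_int (b S) * (\<Prod>t\<in>S. s t))" if "\<forall>t\<in>P. (s t)\<^sup>2 = real t" for s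
    using b0 that by blast
  show ?thesis
  proof (rule redI[where c = "\<lambda>S. a S + b S"])
    fix s :: "nat \<Rightarrow> real" assume s: "\<forall>t\<in>P. (s t)\<^sup>2 = real t"
    show "f s + g s = (\<Sum>S\<in>Pow P. real_of_int (a S + b S) * (\<Prod>t\<in>S. s t))"
      unfolding a[OF s] b[OF s] of_int_add distrib_right sum.distrib ..
  qed
qed

lemma mono_mult:
  assumes P: "finite P" "S \<subseteq> P" "T \<subseteq> P" and s: "\<forall>t\<in>P. (s t)\<^sup>2 = real t"
  shows "(\<Prod>t\<in>S. s t) * (\<Prod>t\<in>T. s t) = real (\<Prod>(S \<inter> T)) * (\<Prod>t\<in>(S - T) \<union> (T - S). s t)"
proof -
  have fS: "finite S" "finite T" using P finite_subset by auto
  have S: "S = (S - T) \<union> (S \<inter> T)" and T: "T = (T - S) \<union> (S \<inter> T)" by auto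
  have pS: "(\<Prod>t\<in>S. s t) = (\<Prod>t\<in>S - T. s t) * (\<Prod>t\<in>S \<inter> T. s t)"
    by (subst S) (rule prod.union_disjoint, use fS in auto)
  have pT: "(\<Prod>t\<in>T. s t) = (\<Prod>t\<in>T - S. s t) * (\<Prod>t\<in>S \<inter> T. s t)"
    by (subst T) (rule prod.union_disjoint, use fS in auto)
  have sq: "(\<Prod>t\<in>S \<inter> T. s t) * (\<Prod>t\<in>S \<inter> T. s t) = real (\<Prod>(S \<inter> T))"
  proof -
    have "(\<Prod>t\<in>S \<inter> T. s t) * (\<Prod>t\<in>S \<inter> T. s t) = (\<Prod>t\<in>S \<inter> T. (s t)\<^sup>2)"
      by (simp add: power2_eq_square prod.distrib)
    also have "\<dots> = (\<Prod>t\<in>S \<inter> T. real t)" using s P(2) by (intro prod.cong refl) auto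
    finally show ?thesis by simp
  qed
  have pU: "(\<Prod>t\<in>(S - T) \<union> (T - S). s t) = (\<Prod>t\<in>S - T. s t) * (\<Prod>t\<in>T - S. s t)"
    by (rule prod.union_disjoint) (use fS in auto)
  show ?thesis unfolding pS pT pU sq[symmetric] by (simp only: mult_ac)
qed

lemma red_mult: "finite P \<Longrightarrow> f \<in> red P \<Longrightarrow> g \<in> red P \<Longrightarrow> (\<lambda>s. f s * g s) \<in> red P"
proof -
  assume P: "finite P" and "f \<in> red P" "g \<in> red P"
  obtain a where a0: "\<forall>s. (\<forall>t\<in>P. (s t)\<^sup>2 = real t) \<longrightarrow> f s = (\<Sum>S\<in>Pow P. real_of_int (a S) * (\<Prod>t\<in>S. s t))"
    using \<open>f \<in> red P\<close> unfolding red_def by blast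
  have a: "f s = (\<Sum>S\<in>Pow P. real_of_int (a S) * (\<Prod>t\<in>S. s t))" if "\<forall>t\<in>P. (s t)\<^sup>2 = real t" for s
    using a0 that by blast
  obtain b where b0: "\<forall>s. (\<forall>t\<in>P. (s t)\<^sup>2 = real t) \<longrightarrow> g s = (\<Sum>S\<in>Pow P. real_of_int (b S) * (\<Prod>t\<in>S. s t))"
    using \<open>g \<in> red P\<close> unfolding red_def by blast
  have b: "g s = (\<Sum>S\<in>Pow P. real_of_int (b S) * (\<Prod>t\<in>S. s t))" if "\<forall>t\<in>P. (s t)\<^sup>2 = real t" for s
    using b0 that by blast
  define cc where "cc U = (\<Sum>S\<in>Pow P. \<Sum>T\<in>Pow P. if (S - T) \<union> (T - S) = U then a S * b T * int (\<Prod>(S \<inter> T)) else 0)" for U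
  show ?thesis
  proof (rule redI[where c = cc])
    fix s :: "nat \<Rightarrow> real" assume s: "\<forall>t\<in>P. (s t)\<^sup>2 = real t"
    have "f s * g s = (\<Sum>S\<in>Pow P. \<Sum>T\<in>Pow P. real_of_int (a S) * real_of_int (b T) * ((\<Prod>t\<in>S. s t) * (\<Prod>t\<in>T. s t)))"
      unfolding a[OF s] b[OF s] sum_product by (intro sum.cong refl) (simp only: mult_ac)
    also have "\<dots> = (\<Sum>S\<in>Pow P. \<Sum>T\<in>Pow P. real_of_int (a S * b T * int (\<Prod>(S \<inter> T))) * (\<Prod>t\<in>(S - T) \<union> (T - S). s t))"
      by (intro sum.cong refl) (simp add: mono_mult[OF P(1) _ _ s])
    also have "\<dots> = (\<Sum>S\<in>Pow P. \<Sum>T\<in>Pow P. \<Sum>U\<in>Pow P. if (S - T) \<union> (T - S) = U then real_of_int (a S * b T * int (\<Prod>(S \<inter> T))) * (\<Prod>t\<in>U. s t) else 0)"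
    proof (intro sum.cong refl)
      fix S T assume "S \<in> Pow P" "T \<in> Pow P"
      then have "(S - T) \<union> (T - S) \<in> Pow P" by auto
      then show "real_of_int (a S * b T * int (\<Prod>(S \<inter> T))) * (\<Prod>t\<in>(S - T) \<union> (T - S). s t) =
         (\<Sum>U\<in>Pow P. if (S - T) \<union> (T - S) = U then real_of_int (a S * b T * int (\<Prod>(S \<inter> T))) * (\<Prod>t\<in>U. s t) else 0)"
        using P(1) by (simp add: sum.delta)
    qed
    also have "\<dots> = (\<Sum>U\<in>Pow P. \<Sum>S\<in>Pow P. \<Sum>T\<in>Pow P. if (S - T) \<union> (T - S) = U then real_of_int (a S * b T * int (\<Prod>(S \<inter> T))) * (\<Prod>t\<in>U. s t) else 0)"
    proof -
      have "(\<Sum>S\<in>Pow P. \<Sum>T\<in>Pow P. \<Sum>U\<in>Pow P. G S T U) = (\<Sum>S\<in>Pow P. \<Sum>U\<in>Pow P. \<Sum>T\<in>Pow P. G S T U)" for G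
        by (rule sum.cong[OF refl]) (rule sum.swap)
      also have "(\<Sum>S\<in>Pow P. \<Sum>U\<in>Pow P. \<Sum>T\<in>Pow P. G S T U) = (\<Sum>U\<in>Pow P. \<Sum>S\<in>Pow P. \<Sum>T\<in>Pow P. G S T U)" for G
        by (rule sum.swap)
      finally show ?thesis .
    qed
    also have "\<dots> = (\<Sum>U\<in>Pow P. real_of_int (cc U) * (\<Prod>t\<in>U. s t))"
      unfolding cc_def of_int_sum sum_distrib_right
      by (intro sum.cong refl) (simp add: if_distrib)
    finally show "f s * g s = (\<Sum>U\<in>Pow P. real_of_int (cc U) * (\<Prod>t\<in>U. s t))" .
  qed
qed

lemma red_sum:
  assumes "finite P" "finite I" "\<forall>i\<in>I. F i \<in> red P"
  shows "(\<lambda>s. \<Sum>i\<in>I. F i s) \<in> red P"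
  using assms(2,3)
proof (induction I rule: finite_induct)
  case empty then show ?case using red_const[of P 0] assms(1) by simp
next
  case (insert i I)
  then show ?case using red_add[of "F i" P "\<lambda>s. \<Sum>i\<in>I. F i s"] assms(1) by simp
qed

lemma red_prod:
  assumes "finite P" "finite I" "\<forall>i\<in>I. F i \<in> red P"
  shows "(\<lambda>s. \<Prod>i\<in>I. F i s) \<in> red P"
  using assms(2,3)
proof (induction I rule: finite_induct)
  case empty then show ?case using red_const[of P 1] assms(1) by simp
next
  case (insert i I)
  then show ?case using red_mult[of P "F i" "\<lambda>s. \<Prod>i\<in>I. F i s"] assms(1) by simp
qed

lemma red_pow: "finite P \<Longrightarrow> f \<in> red P \<Longrightarrow> (\<lambda>s. f s ^ n) \<in> red P"
proof (induction n)
  case 0 then show ?case using red_const[of P 1] by simp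
next
  case (Suc n)
  then show ?case using red_mult[of P f "\<lambda>s. f s ^ n"] by simp
qed


lemma sign_Ints: "(-1::real) ^ n \<in> \<int>"
  by (induction n) auto

lemma mpoly_eval_cong:
  assumes "\<forall>\<alpha>\<in>Poly_Mapping.keys Q. Poly_Mapping.keys \<alpha> \<subseteq> {..<q}" "\<forall>i<q. x i = y i"
  shows "mpoly_eval Q x = mpoly_eval Q y"
  unfolding mpoly_eval_def monom_eval_def
proof (intro sum.cong refl arg_cong2[where f = "(*)"] prod.cong)
  fix m i assume "m \<in> Poly_Mapping.keys Q" "i \<in> Poly_Mapping.keys m"
  then have "i < q" using assms(1) by blast
  then show "x i ^ Poly_Mapping.lookup m i = y i ^ Poly_Mapping.lookup m i" using assms(2) by simp
qed

lemma mpoly_eval_form: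
  assumes "\<forall>\<alpha>\<in>Poly_Mapping.keys Q. Poly_Mapping.keys \<alpha> \<subseteq> {..<q}"
  shows "mpoly_eval Q x = (\<Sum>m\<in>Poly_Mapping.keys Q. real_of_int (Poly_Mapping.lookup Q m) *
     (\<Prod>i<q. x i ^ Poly_Mapping.lookup m i))"
  unfolding mpoly_eval_def monom_eval_def
proof (intro sum.cong refl arg_cong2[where f = "(*)"])
  fix m assume "m \<in> Poly_Mapping.keys Q"
  then have "Poly_Mapping.keys m \<subseteq> {..<q}" using assms by auto
  then show "(\<Prod>i\<in>Poly_Mapping.keys m. x i ^ Poly_Mapping.lookup m i) = (\<Prod>i<q. x i ^ Poly_Mapping.lookup m i)"
    by (intro prod.mono_neutral_left) (auto simp: in_keys_iff)
qed

theorem lemma2p1: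
  fixes Q :: int_mpoly and q :: nat and d :: "nat \<Rightarrow> nat"
    and p :: "nat \<Rightarrow> nat \<Rightarrow> nat" and b :: "nat \<Rightarrow> nat \<Rightarrow> bool"
    and k :: "nat \<Rightarrow> nat" and \<pi> :: "nat \<Rightarrow> real"
  assumes vars: "\<forall>\<alpha>\<in>Poly_Mapping.keys Q. Poly_Mapping.keys \<alpha> \<subseteq> {..<q}"
    and deg: "\<forall>\<alpha>\<in>Poly_Mapping.keys Q. \<forall>i<q. Poly_Mapping.lookup \<alpha> i \<le> d i"
    and k_def: "\<forall>i<q. k i = nat \<lceil>log 2 (real (d i + 1))\<rceil>"
    and primes: "\<forall>i<q. \<forall>j<k i. prime (p i j)"
    and distinct: "inj_on (\<lambda>(i, j). p i j) (SIGMA i:{..<q}. {..<k i})"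
    and pi_def: "\<forall>i<q. \<pi> i = (\<Sum>j<k i. (-1) ^ (if b i j then 1 else 0) * sqrt (real (p i j)))"
  shows "Q \<noteq> 0 \<longleftrightarrow> mpoly_eval Q \<pi> \<noteq> 0"
proof
  assume "mpoly_eval Q \<pi> \<noteq> 0"
  then show "Q \<noteq> 0" by (auto simp: mpoly_eval_def)
next
  assume Qnz: "Q \<noteq> 0"
  show "mpoly_eval Q \<pi> \<noteq> 0"
  proof
    assume Z: "mpoly_eval Q \<pi> = 0"
    define SIG where "SIG = (SIGMA i:{..<q}. {..<k i})"
    define P where "P = (\<lambda>(i, j). p i j) ` SIG"
    have finSIG: "finite SIG" unfolding SIG_def by auto
    have finP: "finite P" unfolding P_def using finSIG by auto
    have Pprime: "\<forall>t\<in>P. prime t" unfolding P_def SIG_def using primes by auto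
    have pinP: "p i j \<in> P" if "i < q" "j < k i" for i j
      unfolding P_def SIG_def using that by force
    define \<pi>s where "\<pi>s s i = (\<Sum>j<k i. (-1::real) ^ (if b i j then 1 else 0) * s (p i j))"
      for s :: "nat \<Rightarrow> real" and i
    have \<pi>red: "(\<lambda>s. \<pi>s s i) \<in> red P" if "i < q" for i
      unfolding \<pi>s_def
      by (intro red_sum[OF finP] finite_lessThan ballI red_mult[OF finP] red_const[OF finP] red_var[OF finP]
          sign_Ints pinP that) auto
    have fred: "(\<lambda>s. mpoly_eval Q (\<pi>s s)) \<in> red P"
      unfolding mpoly_eval_def monom_eval_def
    proof (intro red_sum[OF finP] finite_keys ballI red_mult[OF finP] red_const[OF finP] red_prod[OF finP]
        red_pow[OF finP])
      fix m assume "m \<in> Poly_Mapping.keys Q"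
      show "real_of_int (Poly_Mapping.lookup Q m) \<in> \<int>" by simp
      fix i assume "i \<in> Poly_Mapping.keys m"
      then have "i < q" using vars \<open>m \<in> _\<close> by auto
      then show "(\<lambda>s. \<pi>s s i) \<in> red P" by (rule \<pi>red)
    qed
    obtain c where c: "\<forall>s. (\<forall>t\<in>P. (s t)\<^sup>2 = real t) \<longrightarrow>
        mpoly_eval Q (\<pi>s s) = (\<Sum>S\<in>Pow P. real_of_int (c S) * (\<Prod>t\<in>S. s t))"
      using fred unfolding red_def by blast
    have cong: "mpoly_eval Q x = mpoly_eval Q y" if "\<forall>i<q. x i = y i" for x y
      using mpoly_eval_cong[OF vars that] .
    have "mpoly_eval Q (\<pi>s (\<lambda>t. sqrt (real t))) = mpoly_eval Q \<pi>"
      by (rule cong) (simp add: pi_def \<pi>s_def)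
    moreover have "mpoly_eval Q (\<pi>s (\<lambda>t. sqrt (real t))) = (\<Sum>S\<in>Pow P. real_of_int (c S) * rt S)"
      using c[rule_format, of "\<lambda>t. sqrt (real t)"] by (simp add: rt_def)
    ultimately have sum0: "(\<Sum>S\<in>Pow P. real_of_int (c S) * rt S) = 0" using Z by simp
    have cr: "\<forall>S. real_of_int (c S) \<in> \<rat>" using Rats_of_int by blast
    have c0: "\<forall>S\<in>Pow P. real_of_int (c S) = 0"
      by (rule lin_indep[OF finP Pprime cr sum0])
    have allzero: "mpoly_eval Q (\<pi>s s) = 0" if "\<forall>t\<in>P. (s t)\<^sup>2 = real t" for s
      using c that c0 by simp
    define E where "E i = PiE {..<k i} (\<lambda>_. (UNIV :: bool set))" for i
    define g where "g i \<epsilon> = (\<Sum>j<k i. (-1::real) ^ (if b i j then 1 else 0) *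
        ((if \<epsilon> j then 1 else -1) * sqrt (real (p i j))))" for i \<epsilon>
    define A where "A i = g i ` E i" for i
    have injp: "inj_on (p i) {..<k i}" if "i < q" for i
      using distinct that unfolding inj_on_def by auto
    have injg: "inj_on (g i) (E i)" if iq: "i < q" for i
    proof (rule inj_onI)
      fix e e' assume ee: "e \<in> E i" "e' \<in> E i" "g i e = g i e'"
      define w where "w t = (let j = the_inv_into {..<k i} (p i) t in
          (-1::real) ^ (if b i j then 1 else 0) * ((if e j then 1 else -1) - (if e' j then 1 else -1)))" for t
      have wj: "w (p i j) = (-1::real) ^ (if b i j then 1 else 0) * ((if e j then 1 else -1) - (if e' j then 1 else -1))"
        if "j < k i" for j
        unfolding w_def Let_def using the_inv_into_f_f[OF injp[OF iq], of j] that by simp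
      have "(\<Sum>t\<in>p i ` {..<k i}. w t * sqrt (real t)) = (\<Sum>j<k i. w (p i j) * sqrt (real (p i j)))"
        by (simp add: sum.reindex[OF injp[OF iq]])
      also have "\<dots> = g i e - g i e'"
        unfolding g_def sum_subtractf[symmetric]
        by (intro sum.cong refl) (simp add: wj algebra_simps)
      finally have ws0: "(\<Sum>t\<in>p i ` {..<k i}. w t * sqrt (real t)) = 0" using ee by simp
      have wr: "\<forall>t. w t \<in> \<rat>" unfolding w_def Let_def by (auto simp: sign_Ints intro!: Rats_mult Rats_diff)
      have finpi: "finite (p i ` {..<k i})" by simp
      have prpi: "\<forall>t\<in>p i ` {..<k i}. prime t" using primes iq by blast
      have w0: "\<forall>t\<in>p i ` {..<k i}. w t = 0"
        by (rule lin_indep_sqrt[OF finpi prpi wr ws0])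
      show "e = e'"
      proof (rule PiE_ext)
        show "e \<in> PiE {..<k i} (\<lambda>_. UNIV)" "e' \<in> PiE {..<k i} (\<lambda>_. UNIV)" using ee unfolding E_def by auto
        fix j assume "j \<in> {..<k i}"
        then have "w (p i j) = 0" using w0 by auto
        then show "e j = e' j" using wj \<open>j \<in> _\<close> by (auto split: if_splits)
      qed
    qed
    have cardA: "card (A i) = 2 ^ k i" if "i < q" for i
      unfolding A_def using card_image[OF injg[OF that]] by (simp add: E_def card_PiE)
    have finA: "finite (A i)" for i
      unfolding A_def E_def by (intro finite_imageI finite_PiE) auto
    have dk: "d i < 2 ^ k i" if "i < q" for i
    proof -
      have l0: "log 2 (real (d i + 1)) \<ge> 0" by simp
      have "real (d i + 1) = 2 powr log 2 (real (d i + 1))" by simp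
      also have "\<dots> \<le> 2 powr real (k i)"
      proof (rule powr_mono)
        have "real (k i) = real_of_int \<lceil>log 2 (real (d i + 1))\<rceil>" using k_def that l0 by simp
        then show "log 2 (real (d i + 1)) \<le> real (k i)" by (simp add: le_of_int_ceiling)
      qed simp
      also have "\<dots> = 2 ^ k i" by (simp add: powr_realpow)
      finally have "real (d i + 1) \<le> 2 ^ k i" .
      then show ?thesis by (metis Suc_eq_plus1 Suc_le_eq of_nat_le_iff of_nat_numeral of_nat_power)
    qed
    have gridvan: "mpoly_eval Q x = 0" if x: "\<forall>i<q. x i \<in> A i" for x
    proof -
      have "\<forall>i\<in>{..<q}. \<exists>\<epsilon>. \<epsilon> \<in> E i \<and> x i = g i \<epsilon>" using x unfolding A_def by auto
      then obtain EE where EE: "\<forall>i\<in>{..<q}. EE i \<in> E i \<and> x i = g i (EE i)"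
        by (metis bchoice)
      have injS: "inj_on (\<lambda>(i, j). p i j) SIG" using distinct unfolding SIG_def .
      define s where "s t = (case the_inv_into SIG (\<lambda>(i, j). p i j) t of (i, j) \<Rightarrow>
          (if EE i j then 1 else -1) * sqrt (real t))" for t
      have sp: "s (p i j) = (if EE i j then 1 else -1) * sqrt (real (p i j))" if "i < q" "j < k i" for i j
      proof -
        have "(i, j) \<in> SIG" unfolding SIG_def using that by auto
        then have "the_inv_into SIG (\<lambda>(i, j). p i j) (p i j) = (i, j)"
          using the_inv_into_f_f[OF injS, of "(i, j)"] by simp
        then show ?thesis unfolding s_def by simp
      qed
      have sv: "\<forall>t\<in>P. (s t)\<^sup>2 = real t"
      proof
        fix t assume "t \<in> P"
        then obtain i j where ij: "i < q" "j < k i" "t = p i j" unfolding P_def SIG_def by auto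
        show "(s t)\<^sup>2 = real t" using sp[OF ij(1,2)] ij(3) by (simp add: power_mult_distrib)
      qed
      have "\<forall>i<q. \<pi>s s i = x i"
      proof (intro allI impI)
        fix i assume "i < q"
        then have "x i = g i (EE i)" using EE by auto
        also have "\<dots> = \<pi>s s i" unfolding g_def \<pi>s_def
          by (intro sum.cong refl) (simp add: sp \<open>i < q\<close>)
        finally show "\<pi>s s i = x i" by simp
      qed
      then have "mpoly_eval Q x = mpoly_eval Q (\<pi>s s)" using cong by metis
      also have "\<dots> = 0" using allzero sv by blast
      finally show ?thesis .
    qed
    define M where "M = Poly_Mapping.lookup ` Poly_Mapping.keys Q"
    define cc where "cc e = real_of_int (Poly_Mapping.lookup Q (Abs_poly_mapping e))" for e
    have injl: "inj_on Poly_Mapping.lookup (Poly_Mapping.keys Q)"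
      by (rule inj_onI) simp
    have form: "mpoly_eval Q x = (\<Sum>e\<in>M. cc e * (\<Prod>i<q. x i ^ e i))" for x
      unfolding mpoly_eval_form[OF vars] M_def cc_def
      by (simp add: sum.reindex[OF injl])
    have "\<forall>e\<in>M. cc e = 0"
    proof (rule grid[of M q d A cc])
      show "finite M" unfolding M_def by simp
      show "\<forall>e\<in>M. (\<forall>i\<ge>q. e i = 0) \<and> (\<forall>i<q. e i \<le> d i)"
      proof
        fix e assume "e \<in> M"
        then obtain m where m: "m \<in> Poly_Mapping.keys Q" "e = Poly_Mapping.lookup m" unfolding M_def by auto
        have "Poly_Mapping.lookup m i = 0" if "q \<le> i" for i
        proof -
          have "Poly_Mapping.keys m \<subseteq> {..<q}" using vars m(1) by blast
          then have "i \<notin> Poly_Mapping.keys m" using that by auto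
          then show ?thesis by (simp add: in_keys_iff)
        qed
        moreover have "\<forall>i<q. Poly_Mapping.lookup m i \<le> d i" using deg m(1) by blast
        ultimately show "(\<forall>i\<ge>q. e i = 0) \<and> (\<forall>i<q. e i \<le> d i)" using m(2) by simp
      qed
      show "\<forall>i<q. finite (A i) \<and> d i < card (A i)" using finA cardA dk by simp
      show "\<forall>x. (\<forall>i<q. x i \<in> A i) \<longrightarrow> (\<Sum>e\<in>M. cc e * (\<Prod>i<q. x i ^ e i)) = 0"
        using gridvan form by simp
    qed
    moreover obtain m where "m \<in> Poly_Mapping.keys Q" using Qnz by fastforce
    ultimately have "Poly_Mapping.lookup Q m = 0" unfolding M_def cc_def by auto
    then show False using \<open>m \<in> _\<close> by (simp add: in_keys_iff)
  qed
qed

end
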